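(* Let $n \ge 1$, $F = \{\mathrm{AND}, \mathrm{OR}\}$, $L = \{x_1, \ldots, x_n\}$ and $\ell \ge n$. The expected runtime $E[T]$ of RLS-GP (with HVL-Prime with subtree deletion as mutation operator, tree size limit $\ell$, and the complete truth table as fitness) on the target $\mathrm{AND}_n$, and likewise on the target $\mathrm{OR}_n$, is $\Omega(n \log n)$.
   Context: Programs are finite rooted binary trees (the empty tree is allowed) whose internal nodes are labelled by binary Boolean functions from $F$ and whose leaves are labelled by literals from $L$; a program computes a Boolean function of $(x_1,\dots,x_n)$ in the obvious way. $\mathrm{AND}_n(x) = x_1 \wedge \dots \wedge x_n$ and $\mathrm{OR}_n(x) = x_1 \vee \dots \vee x_n$. The fitness (to be minimised) of a program $X$ for target $h$ is $f(X) = |\{x \in \{0,1\}^n : X(x) \ne h(x)\}|$. LeafCount$(X)$ is the number of leaves of $X$. HVL-Prime with subtree deletion, applied to a tree $X$: choose $op \in \{\mathrm{INS}, \mathrm{DEL}, \mathrm{SUB}\}$, a literal $l \in L$ and a function $g \in F$, independently and uniformly at random. If $X$ is empty, the result is the tree consisting of the single leaf $l$. Otherwise: if $op = \mathrm{INS}$, choose a node $x$ of $X$ uniformly at random and replace it by a new node labelled $g$ whose two children are the subtree rooted at $x$ and a new leaf $l$, in uniformly random order; if $op = \mathrm{DEL}$, choose a node $x$ of $X$ (leaf or internal) uniformly at random and replace the parent of $x$ by the sibling of $x$ (removing the subtree rooted at $x$ together with its parent); if $op = \mathrm{SUB}$, choose a leaf of $X$ uniformly at random and replace it by $l$. RLS-GP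 with tree size limit $\ell$: start with the empty tree $X$; in each iteration $t = 1, 2, \ldots$ let $X' := $ HVL-Prime$(X)$, and if LeafCount$(X') \le \ell$ and $f(X') \le f(X)$ then set $X := X'$. The runtime $T$ is the number of iterations until the current tree computes exactly the target function (fitness $0$). Asymptotics are as $n \to \infty$. *)

theory Defs
  imports "HOL-Probability.Probability"
begin

datatype gate = AND | OR

text \<open>Non-empty trees; leaf \<open>Leaf i\<close> is the literal x_(i+1), i < n.
  A program is a \<open>tree option\<close>; \<open>None\<close> is the empty tree.\<close>
datatype tree = Leaf nat | Node gate tree tree

type_synonym prog = "tree option"

fun eval_gate :: "gate \<Rightarrow> bool \<Rightarrow> bool \<Rightarrow> bool" where
  "eval_gate AND a b = (a \<and> b)"
| "eval_gate OR a b = (a \<or> b)"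

fun eval_tree :: "tree \<Rightarrow> bool list \<Rightarrow> bool" where
  "eval_tree (Leaf i) x = x ! i"
| "eval_tree (Node g a b) x = eval_gate g (eval_tree a x) (eval_tree b x)"

text \<open>The empty program computes no value (it disagrees with the target everywhere).\<close>
definition eval_prog :: "prog \<Rightarrow> bool list \<Rightarrow> bool option" where
  "eval_prog X x = map_option (\<lambda>t. eval_tree t x) X"

definition inputs :: "nat \<Rightarrow> bool list set" where
  "inputs n = {x. length x = n}"

definition fitness :: "nat \<Rightarrow> (bool list \<Rightarrow> bool) \<Rightarrow> prog \<Rightarrow> nat" where
  "fitness n h X = card {x \<in> inputs n. eval_prog X x \<noteq> Some (h x)}"

definition AND_n :: "nat \<Rightarrow> bool list \<Rightarrow> bool" where
  "AND_n n x = (\<forall>i<n. x ! i)"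

definition OR_n :: "nat \<Rightarrow> bool list \<Rightarrow> bool" where
  "OR_n n x = (\<exists>i<n. x ! i)"

fun leaves :: "tree \<Rightarrow> nat" where
  "leaves (Leaf i) = 1"
| "leaves (Node g a b) = leaves a + leaves b"

definition leaf_count :: "prog \<Rightarrow> nat" where
  "leaf_count X = (case X of None \<Rightarrow> 0 | Some t \<Rightarrow> leaves t)"

section \<open>Positions (paths from the root; False = left, True = right)\<close>

fun positions :: "tree \<Rightarrow> bool list set" where
  "positions (Leaf i) = {[]}"
| "positions (Node g a b) = insert [] (Cons False ` positions a \<union> Cons True ` positions b)"

fun leaf_positions :: "tree \<Rightarrow> bool list set" where
  "leaf_positions (Leaf i) = {[]}"
| "leaf_positions (Node g a b) = Cons False ` leaf_positions a \<union> Cons True ` leaf_positions b"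

fun subtree :: "tree \<Rightarrow> bool list \<Rightarrow> tree" where
  "subtree t [] = t"
| "subtree (Node g a b) (False # p) = subtree a p"
| "subtree (Node g a b) (True # p) = subtree b p"
| "subtree (Leaf i) (_ # p) = Leaf i"

fun replace :: "tree \<Rightarrow> bool list \<Rightarrow> tree \<Rightarrow> tree" where
  "replace t [] s = s"
| "replace (Node g a b) (False # p) s = Node g (replace a p s) b"
| "replace (Node g a b) (True # p) s = Node g a (replace b p s)"
| "replace (Leaf i) (_ # p) s = Leaf i"

datatype mop = INS | DEL | SUB

text \<open>Deleting the node at position p: if p is the root (no parent) the result
  is the empty tree; otherwise the parent of p is replaced by the sibling of p.\<close>
definition delete_at :: "tree \<Rightarrow> bool list \<Rightarrow> prog" where
  "delete_at t p = (if p = [] then None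
     else Some (replace t (butlast p) (subtree t (butlast p @ [\<not> last p]))))"

definition hvl_prime :: "nat \<Rightarrow> prog \<Rightarrow> prog pmf" where
  "hvl_prime n X =
     do { op \<leftarrow> pmf_of_set (UNIV :: mop set);
          l \<leftarrow> pmf_of_set {..<n};
          g \<leftarrow> pmf_of_set (UNIV :: gate set);
          (case X of
             None \<Rightarrow> return_pmf (Some (Leaf l))
           | Some t \<Rightarrow>
               (case op of
                  INS \<Rightarrow> do { p \<leftarrow> pmf_of_set (positions t);
                              b \<leftarrow> pmf_of_set (UNIV :: bool set);
                              return_pmf (Some (replace t p
                                 (if b then Node g (subtree t p) (Leaf l)
                                       else Node g (Leaf l) (subtree t p)))) }
                | DEL \<Rightarrow> map_pmf (delete_at t) (pmf_of_set (positions t))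
                | SUB \<Rightarrow> map_pmf (\<lambda>p. Some (replace t p (Leaf l)))
                                 (pmf_of_set (leaf_positions t)))) }"

definition rls_step :: "nat \<Rightarrow> nat \<Rightarrow> (bool list \<Rightarrow> bool) \<Rightarrow> prog \<Rightarrow> prog pmf" where
  "rls_step n size_limit h X =
     map_pmf (\<lambda>X'. if leaf_count X' \<le> size_limit \<and> fitness n h X' \<le> fitness n h X then X' else X)
             (hvl_prime n X)"

primrec trajectory :: "nat \<Rightarrow> nat \<Rightarrow> (bool list \<Rightarrow> bool) \<Rightarrow> nat \<Rightarrow> prog list pmf" where
  "trajectory n size_limit h 0 = return_pmf [None]"
| "trajectory n size_limit h (Suc t) =
     do { xs \<leftarrow> trajectory n size_limit h t;
          y \<leftarrow> rls_step n size_limit h (last xs);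
          return_pmf (xs @ [y]) }"

text \<open>T = least t such that X_t has fitness 0; then P(T > t) is the probability that
  none of X_0..X_t has fitness 0, and E[T] = sum over t of P(T > t) (in ennreal;
  infinite if T is not integrable).\<close>
definition expected_runtime :: "nat \<Rightarrow> nat \<Rightarrow> (bool list \<Rightarrow> bool) \<Rightarrow> ennreal" where
  "expected_runtime n size_limit h =
     (\<Sum>t. ennreal (measure_pmf.prob (trajectory n size_limit h t)
                       {xs. \<forall>X\<in>set xs. fitness n h X \<noteq> 0}))"

end

theory Submission imports Defs "HOL-Analysis.Harmonic_Numbers" begin

fun lits :: "tree \<Rightarrow> nat set" where
  "lits (Leaf i) = {i}"
| "lits (Node g a b) = lits a \<union> lits b"

definition litsP :: "prog \<Rightarrow> nat set" where
  "litsP X = (case X of None \<Rightarrow> {} | Some t \<Rightarrow> lits t)"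

definition miss :: "nat \<Rightarrow> prog \<Rightarrow> nat set" where
  "miss n X = {..<n} - litsP X"

definition gX :: "nat \<Rightarrow> prog \<Rightarrow> real" where
  "gX n X = real n * harm (card (miss n X))"

lemma lits_subtree: "lits (subtree t p) \<subseteq> lits t"
  by (induction t p rule: subtree.induct) auto

lemma lits_replace: "lits (replace t p s) \<subseteq> lits t \<union> lits s"
  by (induction t p s rule: replace.induct) auto

lemma ins_lits: "lits (replace t p (if b then Node g (subtree t p) (Leaf l)
                                       else Node g (Leaf l) (subtree t p))) \<subseteq> lits t \<union> {l}"
  using lits_replace[of t p] lits_subtree[of t p] by (cases b) fastforce+

lemma sub_lits: "lits (replace t p (Leaf l)) \<subseteq> lits t \<union> {l}"
  using lits_replace[of t p "Leaf l"] by simp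

lemma del_lits: "y = delete_at t p \<Longrightarrow> litsP y \<subseteq> lits t"
  using lits_replace[of t "butlast p"] lits_subtree[of t]
  unfolding delete_at_def litsP_def by (auto split: if_splits)

definition K :: "nat \<Rightarrow> prog \<Rightarrow> mop \<Rightarrow> nat \<Rightarrow> gate \<Rightarrow> prog pmf" where
  "K n X op l g = (case X of
             None \<Rightarrow> return_pmf (Some (Leaf l))
           | Some t \<Rightarrow>
               (case op of
                  INS \<Rightarrow> do { p \<leftarrow> pmf_of_set (positions t);
                              b \<leftarrow> pmf_of_set (UNIV :: bool set);
                              return_pmf (Some (replace t p
                                 (if b then Node g (subtree t p) (Leaf l)
                                       else Node g (Leaf l) (subtree t p)))) }
                | DEL \<Rightarrow> map_pmf (delete_at t) (pmf_of_set (positions t))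
                | SUB \<Rightarrow> map_pmf (\<lambda>p. Some (replace t p (Leaf l)))
                                 (pmf_of_set (leaf_positions t))))"

lemma hvl_K: "hvl_prime n X = do { op \<leftarrow> pmf_of_set (UNIV :: mop set);
          l \<leftarrow> pmf_of_set {..<n};
          g \<leftarrow> pmf_of_set (UNIV :: gate set); K n X op l g}"
  unfolding hvl_prime_def K_def by simp

lemma K_lits: "y \<in> set_pmf (K n X op l g) \<Longrightarrow> litsP y \<subseteq> litsP X \<union> {l}"
proof -
  assume y: "y \<in> set_pmf (K n X op l g)"
  show ?thesis
  proof (cases X)
    case None then show ?thesis using y by (auto simp: K_def litsP_def)
  next
    case (Some t)
    have st: "\<And>p. lits (subtree t p) \<subseteq> lits t" by (rule lits_subtree)
    show ?thesis
    proof (cases op)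
      case INS
      then show ?thesis using y Some ins_lits[of t]
        by (auto simp: K_def litsP_def) (metis insert_iff subsetD)
    next
      case DEL
      then show ?thesis using y Some del_lits[of _ t]
        by (auto simp: K_def litsP_def) 
    next
      case SUB
      then show ?thesis using y Some sub_lits[of t]
        by (auto simp: K_def litsP_def) (metis insert_iff subsetD)
    qed
  qed
qed

lemma hvl_lits: "y \<in> set_pmf (hvl_prime n X) \<Longrightarrow> \<exists>l. litsP y \<subseteq> litsP X \<union> {l}"
  unfolding hvl_K using K_lits by simp blast

lemma rls_lits: "y \<in> set_pmf (rls_step n sl h X) \<Longrightarrow> \<exists>l. litsP y \<subseteq> litsP X \<union> {l}"
  unfolding rls_step_def using hvl_lits by (auto split: if_splits)

lemma hvl_prob:
  assumes n: "n > 0"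
  shows "measure_pmf.prob (hvl_prime n X) {y. \<not> miss n X \<subseteq> miss n y} \<le> card (miss n X) / n"
proof -
  define J where "J = do { op \<leftarrow> pmf_of_set (UNIV :: mop set);
          l \<leftarrow> pmf_of_set {..<n};
          g \<leftarrow> pmf_of_set (UNIV :: gate set); y \<leftarrow> K n X op l g; return_pmf (l, y)}"
  have snd: "map_pmf snd J = hvl_prime n X"
    unfolding J_def hvl_K by (simp add: map_bind_pmf bind_return_pmf')
  have fst: "map_pmf fst J = pmf_of_set {..<n}"
    unfolding J_def by (simp add: map_bind_pmf bind_return_pmf')
  let ?D = "{y. \<not> miss n X \<subseteq> miss n y}"
  have "measure_pmf.prob (hvl_prime n X) ?D = measure_pmf.prob J (snd -` ?D)"
    by (simp flip: snd)
  also have "\<dots> = measure_pmf.prob J (snd -` ?D \<inter> set_pmf J)"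
    by (simp add: measure_Int_set_pmf)
  also have "\<dots> \<le> measure_pmf.prob J (fst -` miss n X)"
  proof (rule measure_pmf.finite_measure_mono)
    show "snd -` ?D \<inter> set_pmf J \<subseteq> fst -` miss n X"
    proof
      fix z assume z: "z \<in> snd -` ?D \<inter> set_pmf J"
      obtain l y where zz: "z = (l, y)" by (cases z)
      from z zz obtain op g where yK: "y \<in> set_pmf (K n X op l g)"
        unfolding J_def by auto
      from K_lits[OF yK] z zz show "z \<in> fst -` miss n X"
        unfolding miss_def by auto
    qed
  qed simp
  also have "\<dots> = measure_pmf.prob (pmf_of_set {..<n}) (miss n X)"
    by (simp flip: fst)
  also have "\<dots> = card (miss n X) / n"
    using n by (subst measure_pmf_of_set) (auto simp: miss_def Int_absorb1 Diff_subset)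
  finally show ?thesis .
qed

lemma rls_prob:
  assumes n: "n > 0"
  shows "measure_pmf.prob (rls_step n sl h X) {y. \<not> miss n X \<subseteq> miss n y} \<le> card (miss n X) / n"
proof -
  let ?D = "{y. \<not> miss n X \<subseteq> miss n y}"
  let ?a = "\<lambda>X'. if leaf_count X' \<le> sl \<and> fitness n h X' \<le> fitness n h X then X' else X"
  have "measure_pmf.prob (rls_step n sl h X) ?D = measure_pmf.prob (hvl_prime n X) (?a -` ?D)"
    unfolding rls_step_def by simp
  also have "\<dots> \<le> measure_pmf.prob (hvl_prime n X) ?D"
    by (rule measure_pmf.finite_measure_mono) auto
  finally show ?thesis using hvl_prob[OF n, of X] by linarith
qed

lemma finite_miss: "finite (miss n X)" unfolding miss_def by simp

lemma card_miss_le: "card (miss n X) \<le> n"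
  unfolding miss_def by (metis Diff_subset card_lessThan card_mono finite_lessThan)

lemma gX_nonneg: "0 \<le> gX n X" unfolding gX_def by (simp add: harm_nonneg)

lemma gX_le: "gX n X \<le> real n * harm n"
  unfolding gX_def by (intro mult_left_mono harm_mono card_miss_le) auto

lemma pointwise:
  assumes "litsP y \<subseteq> litsP X \<union> {l}" and m: "card (miss n X) > 0"
  shows "gX n X \<le> gX n y + real n / card (miss n X) * indicator {y. \<not> miss n X \<subseteq> miss n y} y"
proof (cases "miss n X \<subseteq> miss n y")
  case True
  then have "card (miss n X) \<le> card (miss n y)" by (intro card_mono finite_miss)
  then have "gX n X \<le> gX n y" unfolding gX_def by (intro mult_left_mono harm_mono) auto
  then show ?thesis using True by simp
next
  case False
  have sub: "miss n X - {l} \<subseteq> miss n y" using assms(1) unfolding miss_def by auto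
  obtain k where k: "card (miss n X) = Suc k" using m by (cases "card (miss n X)") auto
  have "k \<le> card (miss n X - {l})" using k by (simp add: card_Diff_singleton_if finite_miss)
  also have "\<dots> \<le> card (miss n y)" by (intro card_mono sub finite_miss)
  finally have "harm k \<le> (harm (card (miss n y)) :: real)" by (rule harm_mono)
  then have "real n * harm k \<le> real n * harm (card (miss n y))" by (intro mult_left_mono) auto
  moreover have "harm (card (miss n X)) = harm k + inverse (real (card (miss n X)))"
    using k by (simp add: harm_Suc)
  ultimately show ?thesis using False unfolding gX_def
    by (simp add: algebra_simps divide_inverse)
qed

lemma step:
  assumes n: "n > 0"
  shows "ennreal (gX n X) \<le> (\<integral>\<^sup>+y. ennreal (gX n y) \<partial>rls_step n sl h X) + 1"
proof (cases "card (miss n X) = 0")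
  case True
  then have "gX n X = 0" unfolding gX_def by (simp add: harm_altdef)
  then show ?thesis by simp
next
  case False
  let ?R = "rls_step n sl h X"
  let ?D = "{y. \<not> miss n X \<subseteq> miss n y}"
  let ?c = "real n / card (miss n X)"
  have "ennreal (gX n X) = (\<integral>\<^sup>+y. ennreal (gX n X) \<partial>?R)"
    by (simp add: measure_pmf.emeasure_space_1)
  also have "\<dots> \<le> (\<integral>\<^sup>+y. ennreal (gX n y) + ennreal ?c * indicator ?D y \<partial>?R)"
  proof (rule nn_integral_mono_AE, rule AE_pmfI)
    fix y assume y: "y \<in> set_pmf ?R"
    obtain l where "litsP y \<subseteq> litsP X \<union> {l}" using rls_lits[OF y] by blast
    from pointwise[OF this] False
    have "gX n X \<le> gX n y + ?c * indicator ?D y" by simp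
    then show "ennreal (gX n X) \<le> ennreal (gX n y) + ennreal ?c * indicator ?D y"
    proof (cases "y \<in> ?D")
      case True
      have "ennreal (gX n X) \<le> ennreal (gX n y + ?c)"
        using True \<open>gX n X \<le> gX n y + ?c * indicator ?D y\<close> by (intro ennreal_leI) simp
      also have "\<dots> = ennreal (gX n y) + ennreal ?c"
        using gX_nonneg[of n y] by (intro ennreal_plus) auto
      finally show ?thesis using True by simp
    next
      case False
      then show ?thesis using \<open>gX n X \<le> gX n y + ?c * indicator ?D y\<close> by (simp add: ennreal_leI)
    qed
  qed
  also have "\<dots> = (\<integral>\<^sup>+y. ennreal (gX n y) \<partial>?R) + ennreal ?c * emeasure ?R ?D"
    by (subst nn_integral_add) (auto simp: nn_integral_cmult_indicator)
  also have "\<dots> \<le> (\<integral>\<^sup>+y. ennreal (gX n y) \<partial>?R) + 1"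
  proof -
    have "emeasure ?R ?D \<le> ennreal (real (card (miss n X)) / real n)"
      using rls_prob[OF n, of sl h X] by (simp add: measure_pmf.emeasure_eq_measure)
    then have "ennreal ?c * emeasure ?R ?D \<le> ennreal ?c * ennreal (real (card (miss n X)) / real n)"
      by (rule mult_left_mono) simp
    also have "\<dots> = 1" using False n by (simp add: ennreal_mult'[symmetric])
    finally show ?thesis by (simp add: add_left_mono)
  qed
  finally show ?thesis .
qed

lemma eval_upd: "i \<notin> lits t \<Longrightarrow> eval_tree t (x[i := v]) = eval_tree t x"
  by (induction t) auto

lemma fit0_correct:
  assumes "fitness n h X = 0" "length x = n"
  shows "eval_prog X x = Some (h x)"
proof -
  have fin: "finite (inputs n)"
  proof -
    have "inputs n \<subseteq> {xs. set xs \<subseteq> UNIV \<and> length xs = n}" unfolding inputs_def by auto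
    then show ?thesis using finite_lists_length_eq[of "UNIV :: bool set" n] finite_subset by auto
  qed
  have "{x \<in> inputs n. eval_prog X x \<noteq> Some (h x)} = {}"
    using assms(1) fin unfolding fitness_def by simp
  then show ?thesis using assms(2) unfolding inputs_def by auto
qed

lemma fit0_AND:
  assumes "fitness n (AND_n n) X = 0" shows "miss n X = {}"
proof (rule ccontr)
  assume "miss n X \<noteq> {}"
  then obtain i where i: "i < n" "i \<notin> litsP X" unfolding miss_def by auto
  let ?x = "replicate n True"
  let ?y = "?x[i := False]"
  have 1: "eval_prog X ?x = Some True" using fit0_correct[OF assms, of ?x] by (simp add: AND_n_def)
  have 2: "eval_prog X ?y = Some False" using fit0_correct[OF assms, of ?y] i by (auto simp: AND_n_def)
  show False
  proof (cases X)
    case None then show False using 1 by (simp add: eval_prog_def)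
  next
    case (Some t)
    then have "i \<notin> lits t" using i by (simp add: litsP_def)
    then show False using 1 2 Some eval_upd[of i t ?x False] by (simp add: eval_prog_def)
  qed
qed

lemma fit0_OR:
  assumes "fitness n (OR_n n) X = 0" shows "miss n X = {}"
proof (rule ccontr)
  assume "miss n X \<noteq> {}"
  then obtain i where i: "i < n" "i \<notin> litsP X" unfolding miss_def by auto
  let ?x = "replicate n False"
  let ?y = "?x[i := True]"
  have 1: "eval_prog X ?x = Some False" using fit0_correct[OF assms, of ?x] by (simp add: OR_n_def)
  have 2: "eval_prog X ?y = Some True" using fit0_correct[OF assms, of ?y] i by (auto simp: OR_n_def)
  show False
  proof (cases X)
    case None then show False using 1 by (simp add: eval_prog_def)
  next
    case (Some t)
    then have "i \<notin> lits t" using i by (simp add: litsP_def)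
    then show False using 1 2 Some eval_upd[of i t ?x True] by (simp add: eval_prog_def)
  qed
qed

definition Aset :: "nat \<Rightarrow> (bool list \<Rightarrow> bool) \<Rightarrow> prog list set" where
  "Aset n h = {xs. \<forall>X\<in>set xs. fitness n h X \<noteq> 0}"

definition Phi :: "nat \<Rightarrow> nat \<Rightarrow> (bool list \<Rightarrow> bool) \<Rightarrow> nat \<Rightarrow> ennreal" where
  "Phi n sl h t = (\<integral>\<^sup>+xs. ennreal (gX n (last xs)) * indicator (Aset n h) xs \<partial>trajectory n sl h t)"

lemma Phi_step:
  assumes n: "n > 0" and hz: "\<And>X. fitness n h X = 0 \<Longrightarrow> miss n X = {}"
  shows "Phi n sl h t \<le> Phi n sl h (Suc t) + emeasure (trajectory n sl h t) (Aset n h)"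
proof -
  let ?T = "trajectory n sl h t"
  let ?R = "\<lambda>xs. rls_step n sl h (last xs)"
  have pw: "ennreal (gX n y) * indicator (Aset n h) (xs @ [y]) = ennreal (gX n y) * indicator (Aset n h) xs"
    for xs y
  proof (cases "fitness n h y = 0")
    case True
    then have "gX n y = 0" using hz[OF True] by (simp add: gX_def harm_altdef)
    then show ?thesis by simp
  next
    case False
    then show ?thesis by (simp add: Aset_def indicator_def)
  qed
  have "Phi n sl h (Suc t) = (\<integral>\<^sup>+xs. \<integral>\<^sup>+y. ennreal (gX n y) * indicator (Aset n h) (xs @ [y]) \<partial>?R xs \<partial>?T)"
    unfolding Phi_def by simp
  also have "\<dots> = (\<integral>\<^sup>+xs. (\<integral>\<^sup>+y. ennreal (gX n y) \<partial>?R xs) * indicator (Aset n h) xs \<partial>?T)"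
    by (simp add: pw nn_integral_multc)
  finally have e: "Phi n sl h (Suc t) = \<dots>" .
  have "Phi n sl h t \<le> (\<integral>\<^sup>+xs. ((\<integral>\<^sup>+y. ennreal (gX n y) \<partial>?R xs) + 1) * indicator (Aset n h) xs \<partial>?T)"
    unfolding Phi_def
    by (intro nn_integral_mono mult_right_mono step[OF n]) simp
  also have "\<dots> = (\<integral>\<^sup>+xs. (\<integral>\<^sup>+y. ennreal (gX n y) \<partial>?R xs) * indicator (Aset n h) xs + indicator (Aset n h) xs \<partial>?T)"
    by (simp add: distrib_right)
  also have "\<dots> = Phi n sl h (Suc t) + emeasure ?T (Aset n h)"
    by (subst nn_integral_add) (auto simp: e)
  finally show ?thesis .
qed

lemma Phi_le:
  "Phi n sl h t \<le> ennreal (real n * harm n) * ennreal (measure_pmf.prob (trajectory n sl h t) (Aset n h))"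
proof -
  have "Phi n sl h t \<le> (\<integral>\<^sup>+xs. ennreal (real n * harm n) * indicator (Aset n h) xs \<partial>trajectory n sl h t)"
    unfolding Phi_def by (intro nn_integral_mono mult_right_mono ennreal_leI gX_le) simp
  also have "\<dots> = ennreal (real n * harm n) * emeasure (trajectory n sl h t) (Aset n h)"
    by (simp add: nn_integral_cmult_indicator)
  finally show ?thesis by (simp add: measure_pmf.emeasure_eq_measure)
qed

lemma Phi_0:
  assumes n: "n > 0" and hz: "\<And>X. fitness n h X = 0 \<Longrightarrow> miss n X = {}"
  shows "Phi n sl h 0 = ennreal (real n * harm n)"
proof -
  have mn: "miss n None = {..<n}" by (simp add: miss_def litsP_def)
  then have "fitness n h None \<noteq> 0" using hz n by auto
  then have "[None] \<in> Aset n h" by (simp add: Aset_def)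
  then show ?thesis unfolding Phi_def by (simp add: gX_def mn)
qed

lemma Phi_ind:
  assumes n: "n > 0" and hz: "\<And>X. fitness n h X = 0 \<Longrightarrow> miss n X = {}"
  shows "ennreal (real n * harm n) \<le> Phi n sl h t + (\<Sum>s<t. emeasure (trajectory n sl h s) (Aset n h))"
proof (induction t)
  case 0 then show ?case using Phi_0[OF n hz] by simp
next
  case (Suc t)
  also have "Phi n sl h t + (\<Sum>s<t. emeasure (trajectory n sl h s) (Aset n h))
     \<le> Phi n sl h (Suc t) + emeasure (trajectory n sl h t) (Aset n h) + (\<Sum>s<t. emeasure (trajectory n sl h s) (Aset n h))"
    using Phi_step[OF n hz] by (intro add_right_mono)
  finally show ?case by (simp add: ac_simps)
qed

lemma main:
  assumes n: "n > 0" and hz: "\<And>X. fitness n h X = 0 \<Longrightarrow> miss n X = {}"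
  shows "ennreal (real n * harm n / 2) \<le> expected_runtime n sl h"
proof -
  define p where "p s = measure_pmf.prob (trajectory n sl h s) (Aset n h)" for s
  define G where "G = real n * harm n"
  have G0: "G \<ge> 0" unfolding G_def by (simp add: harm_nonneg)
  have p0: "0 \<le> p s" for s unfolding p_def by simp
  have ER: "expected_runtime n sl h = (\<Sum>s. ennreal (p s))"
    unfolding expected_runtime_def p_def Aset_def by simp
  have part: "ennreal (\<Sum>s<t. p s) \<le> expected_runtime n sl h" for t
  proof -
    have "ennreal (\<Sum>s<t. p s) = (\<Sum>s<t. ennreal (p s))" using p0 by simp
    also have "\<dots> \<le> (\<Sum>s. ennreal (p s))" by (intro sum_le_suminf) auto
    finally show ?thesis using ER by simp
  qed
  have key: "G \<le> G * p t + (\<Sum>s<t. p s)" for t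
  proof -
    have "ennreal G \<le> Phi n sl h t + (\<Sum>s<t. ennreal (p s))"
      using Phi_ind[OF n hz, where sl=sl and t=t] unfolding G_def p_def by (simp add: measure_pmf.emeasure_eq_measure)
    also have "\<dots> \<le> ennreal G * ennreal (p t) + (\<Sum>s<t. ennreal (p s))"
      using Phi_le[of n sl h t] unfolding G_def p_def by (intro add_right_mono)
    also have "\<dots> = ennreal (G * p t + (\<Sum>s<t. p s))"
      using p0 G0 by (simp add: ennreal_mult'' ennreal_plus sum_nonneg)
    finally have "ennreal G \<le> ennreal (G * p t + (\<Sum>s<t. p s))" .
    moreover have "0 \<le> G * p t + (\<Sum>s<t. p s)" using G0 p0 by (simp add: sum_nonneg)
    ultimately show ?thesis using ennreal_le_iff by blast
  qed
  show ?thesis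
  proof (cases "\<exists>t. p t < 1/2")
    case True
    then obtain t where t: "p t < 1/2" by blast
    have "G * p t \<le> G / 2" using mult_left_mono[of "p t" "1/2" G] t G0 by simp
    then have "G / 2 \<le> (\<Sum>s<t. p s)" using key[of t] by linarith
    then have "ennreal (G / 2) \<le> ennreal (\<Sum>s<t. p s)" by (rule ennreal_leI)
    then show ?thesis using part[of t] unfolding G_def by simp
  next
    case False
    then have ph: "p s \<ge> 1/2" for s by (simp add: not_less)
    define t where "t = nat \<lceil>G\<rceil>"
    have "G / 2 \<le> real t / 2" unfolding t_def by linarith
    also have "\<dots> = (\<Sum>s<t. (1/2::real))" by simp
    also have "\<dots> \<le> (\<Sum>s<t. p s)" by (intro sum_mono ph)
    finally have "ennreal (G / 2) \<le> ennreal (\<Sum>s<t. p s)" by (rule ennreal_leI)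
    then show ?thesis using part[of t] unfolding G_def by simp
  qed
qed

lemma lnbound: "n > 0 \<Longrightarrow> ennreal (1/2 * real n * ln (real n)) \<le> ennreal (real n * harm n / 2)"
proof -
  assume "n > 0"
  have "ln (real n) \<le> ln (real n + 1)" using \<open>n > 0\<close> by simp
  also have "\<dots> \<le> harm n" by (rule ln_le_harm)
  finally have "real n * ln (real n) \<le> real n * harm n" by (intro mult_left_mono) auto
  then show ?thesis by (intro ennreal_leI) simp
qed

theorem theorem3:
  shows "\<exists>c>0. \<exists>N. \<forall>n\<ge>N. \<forall>size_limit\<ge>n.
           expected_runtime n size_limit (AND_n n) \<ge> ennreal (c * real n * ln (real n)) \<and>
           expected_runtime n size_limit (OR_n n) \<ge> ennreal (c * real n * ln (real n))"
proof (intro exI[of _ "1/2"] conjI exI[of _ 1] allI impI)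
  fix n sl :: nat assume n1: "1 \<le> n" and "n \<le> sl"
  then have n: "n > 0" by simp
  show "expected_runtime n sl (AND_n n) \<ge> ennreal (1/2 * real n * ln (real n))"
    using order_trans[OF lnbound[OF n] main[OF n fit0_AND]] .
  show "expected_runtime n sl (OR_n n) \<ge> ennreal (1/2 * real n * ln (real n))"
    using order_trans[OF lnbound[OF n] main[OF n fit0_OR]] .
qed simp

end
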